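(* Let $p$ be a prime and let $G$ be a group of order $p^7$ and nilpotency class $4$ with $|\gamma_2(G)| = p^5$. Then $\gamma_2(G)$ is abelian.
   Context: $\gamma_2(G)$ denotes the commutator subgroup of $G$. *)

theory Defs
  imports "HOL-Algebra.Algebra"
begin

definition comm_subgroup :: "('a, 'b) monoid_scheme \<Rightarrow> 'a set \<Rightarrow> 'a set \<Rightarrow> 'a set" where
  "comm_subgroup G H K = generate G
     (\<Union>h \<in> H. \<Union>k \<in> K. { h \<otimes>\<^bsub>G\<^esub> k \<otimes>\<^bsub>G\<^esub> inv\<^bsub>G\<^esub> h \<otimes>\<^bsub>G\<^esub> inv\<^bsub>G\<^esub> k })"

fun lower_central :: "('a, 'b) monoid_scheme \<Rightarrow> nat \<Rightarrow> 'a set" where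
  "lower_central G 0 = carrier G"
| "lower_central G (Suc 0) = carrier G"
| "lower_central G (Suc (Suc n)) = comm_subgroup G (lower_central G (Suc n)) (carrier G)"

definition nilpotency_class :: "('a, 'b) monoid_scheme \<Rightarrow> nat \<Rightarrow> bool" where
  "nilpotency_class G c \<longleftrightarrow>
     lower_central G (Suc c) = {\<one>\<^bsub>G\<^esub>} \<and>
     (\<forall>i \<le> c. lower_central G i \<noteq> {\<one>\<^bsub>G\<^esub>})"

end

theory Submission
  imports Defs "HOL-Computational_Algebra.Primes"
begin

lemma comm_in:
  "h \<in> H \<Longrightarrow> k \<in> K \<Longrightarrow> h \<otimes>\<^bsub>G\<^esub> k \<otimes>\<^bsub>G\<^esub> inv\<^bsub>G\<^esub> h \<otimes>\<^bsub>G\<^esub> inv\<^bsub>G\<^esub> k \<in> comm_subgroup G H K"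
  unfolding comm_subgroup_def by (rule generate.incl) blast

context group begin

lemma canc1: "x \<in> carrier G \<Longrightarrow> z \<in> carrier G \<Longrightarrow> inv x \<otimes> (x \<otimes> z) = z"
  by (simp add: m_assoc[symmetric])
lemma canc2: "x \<in> carrier G \<Longrightarrow> z \<in> carrier G \<Longrightarrow> x \<otimes> (inv x \<otimes> z) = z"
  by (simp add: m_assoc[symmetric])
lemmas gsimps = m_assoc inv_mult_group canc1 canc2

lemma comm_subgroup_sub:
  "H \<subseteq> carrier G \<Longrightarrow> K \<subseteq> carrier G \<Longrightarrow> subgroup (comm_subgroup G H K) G"
  unfolding comm_subgroup_def by (rule generate_is_subgroup) (fastforce intro!: m_closed inv_closed)

lemma comm_subgroup_min:
  "subgroup N G \<Longrightarrow> (\<And>h k. h \<in> H \<Longrightarrow> k \<in> K \<Longrightarrow> h \<otimes> k \<otimes> inv h \<otimes> inv k \<in> N)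
    \<Longrightarrow> comm_subgroup G H K \<subseteq> N"
  unfolding comm_subgroup_def by (rule generate_subgroup_incl) auto

lemma comm_one_iff:
  assumes "a \<in> carrier G" "b \<in> carrier G"
  shows "a \<otimes> b \<otimes> inv a \<otimes> inv b = \<one> \<longleftrightarrow> a \<otimes> b = b \<otimes> a"
proof -
  have "a \<otimes> b \<otimes> inv a \<otimes> inv b = \<one> \<longleftrightarrow> a \<otimes> b \<otimes> inv a = \<one> \<otimes> b"
    using assms by (subst inv_solve_right') auto
  also have "\<dots> \<longleftrightarrow> a \<otimes> b = b \<otimes> a"
    using assms by (subst inv_solve_right') auto
  finally show ?thesis .
qed

lemma comm_inv:
  assumes "a \<in> carrier G" "b \<in> carrier G"
  shows "inv (a \<otimes> b \<otimes> inv a \<otimes> inv b) = b \<otimes> a \<otimes> inv b \<otimes> inv a"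
  using assms by (simp add: inv_mult_group m_assoc)

lemma comm_normal:
  assumes "subgroup N G" "\<And>g n. g \<in> carrier G \<Longrightarrow> n \<in> N \<Longrightarrow> g \<otimes> n \<otimes> inv g \<otimes> inv n \<in> N"
  shows "N \<lhd> G"
  unfolding normal_inv_iff
proof (intro conjI ballI assms(1))
  fix x h assume x: "x \<in> carrier G" and h: "h \<in> N"
  have hc: "h \<in> carrier G" using h assms(1) subgroup.subset by blast
  have "x \<otimes> h \<otimes> inv x = (x \<otimes> h \<otimes> inv x \<otimes> inv h) \<otimes> h"
    using x hc by (simp add: m_assoc)
  then show "x \<otimes> h \<otimes> inv x \<in> N" using assms x h subgroup.m_closed by metis
qed

lemma centr_sub:
  assumes x: "x \<in> carrier G"
  shows "subgroup {g \<in> carrier G. x \<otimes> g = g \<otimes> x} G"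
proof (rule subgroup.intro)
  fix g h assume g: "g \<in> {g \<in> carrier G. x \<otimes> g = g \<otimes> x}" and h: "h \<in> {g \<in> carrier G. x \<otimes> g = g \<otimes> x}"
  then have gc: "g \<in> carrier G" and hc: "h \<in> carrier G" and eg: "x \<otimes> g = g \<otimes> x" and eh: "x \<otimes> h = h \<otimes> x"
    by auto
  have "x \<otimes> (g \<otimes> h) = (x \<otimes> g) \<otimes> h" using x gc hc by (simp add: m_assoc)
  also have "\<dots> = g \<otimes> (x \<otimes> h)" using x gc hc eg by (simp add: m_assoc)
  also have "\<dots> = (g \<otimes> h) \<otimes> x" using x gc hc eh by (simp add: m_assoc)
  finally show "g \<otimes> h \<in> {g \<in> carrier G. x \<otimes> g = g \<otimes> x}" using gc hc by simp
next
  fix g assume g: "g \<in> {g \<in> carrier G. x \<otimes> g = g \<otimes> x}"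
  then have gc: "g \<in> carrier G" and e: "x \<otimes> g = g \<otimes> x" by auto
  have "x \<otimes> inv g = inv g \<otimes> (g \<otimes> x) \<otimes> inv g" using x gc by (simp add: canc1)
  also have "\<dots> = inv g \<otimes> (x \<otimes> g) \<otimes> inv g" using e by simp
  also have "\<dots> = inv g \<otimes> x" using x gc by (simp add: m_assoc)
  finally show "inv g \<in> {g \<in> carrier G. x \<otimes> g = g \<otimes> x}" using gc by simp
next
  show "{g \<in> carrier G. x \<otimes> g = g \<otimes> x} \<subseteq> carrier G" by blast
  show "\<one> \<in> {g \<in> carrier G. x \<otimes> g = g \<otimes> x}" using x by simp
qed

lemma generate_comm:
  assumes S: "S \<subseteq> carrier G" and c: "\<And>x y. x \<in> S \<Longrightarrow> y \<in> S \<Longrightarrow> x \<otimes> y = y \<otimes> x"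
    and x: "x \<in> generate G S" and y: "y \<in> generate G S"
  shows "x \<otimes> y = y \<otimes> x"
proof -
  have 1: "generate G S \<subseteq> {g \<in> carrier G. s \<otimes> g = g \<otimes> s}" if "s \<in> S" for s
    using that S c by (intro generate_subgroup_incl centr_sub) auto
  have xc: "x \<in> carrier G" using x S generate_in_carrier by blast
  have xs: "x \<otimes> s = s \<otimes> x" if "s \<in> S" for s
    using 1[OF that] x by auto
  have "generate G S \<subseteq> {g \<in> carrier G. x \<otimes> g = g \<otimes> x}"
    using xs xc S by (intro generate_subgroup_incl centr_sub) auto
  then show ?thesis using y by auto
qed

lemma T_sub:
  assumes N: "N \<lhd> G" and x: "x \<in> carrier G"
  shows "subgroup {y \<in> carrier G. x \<otimes> y \<otimes> inv x \<otimes> inv y \<in> N} G"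
proof (rule subgroup.intro)
  fix g h assume g: "g \<in> {y \<in> carrier G. x \<otimes> y \<otimes> inv x \<otimes> inv y \<in> N}"
    and h: "h \<in> {y \<in> carrier G. x \<otimes> y \<otimes> inv x \<otimes> inv y \<in> N}"
  then have gc: "g \<in> carrier G" and hc: "h \<in> carrier G"
    and g1: "x \<otimes> g \<otimes> inv x \<otimes> inv g \<in> N" and h1: "x \<otimes> h \<otimes> inv x \<otimes> inv h \<in> N" by auto
  have "g \<otimes> (x \<otimes> h \<otimes> inv x \<otimes> inv h) \<otimes> inv g \<in> N"
    using N gc h1 normal_inv_iff by blast
  then have "(x \<otimes> g \<otimes> inv x \<otimes> inv g) \<otimes> (g \<otimes> (x \<otimes> h \<otimes> inv x \<otimes> inv h) \<otimes> inv g) \<in> N"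
    by (intro subgroup.m_closed[OF normal_imp_subgroup[OF N]] g1 \<open>g \<otimes> (x \<otimes> h \<otimes> inv x \<otimes> inv h) \<otimes> inv g \<in> N\<close>)
  moreover have "(x \<otimes> g \<otimes> inv x \<otimes> inv g) \<otimes> (g \<otimes> (x \<otimes> h \<otimes> inv x \<otimes> inv h) \<otimes> inv g)
      = x \<otimes> (g \<otimes> h) \<otimes> inv x \<otimes> inv (g \<otimes> h)"
    using x gc hc by (simp add: gsimps)
  ultimately show "g \<otimes> h \<in> {y \<in> carrier G. x \<otimes> y \<otimes> inv x \<otimes> inv y \<in> N}" using gc hc by auto
next
  fix g assume g: "g \<in> {y \<in> carrier G. x \<otimes> y \<otimes> inv x \<otimes> inv y \<in> N}"
  then have gc: "g \<in> carrier G" and g1: "x \<otimes> g \<otimes> inv x \<otimes> inv g \<in> N" by auto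
  have "inv (x \<otimes> g \<otimes> inv x \<otimes> inv g) \<in> N"
    by (intro subgroup.m_inv_closed[OF normal_imp_subgroup[OF N]] g1)
  then have "inv g \<otimes> inv (x \<otimes> g \<otimes> inv x \<otimes> inv g) \<otimes> inv (inv g) \<in> N"
    using N gc normal_inv_iff by blast
  moreover have "inv g \<otimes> inv (x \<otimes> g \<otimes> inv x \<otimes> inv g) \<otimes> inv (inv g) = x \<otimes> inv g \<otimes> inv x \<otimes> inv (inv g)"
    using x gc by (simp add: gsimps)
  ultimately show "inv g \<in> {y \<in> carrier G. x \<otimes> y \<otimes> inv x \<otimes> inv y \<in> N}" using gc by auto
next
  show "\<one> \<in> {y \<in> carrier G. x \<otimes> y \<otimes> inv x \<otimes> inv y \<in> N}"
    using x subgroup.one_closed[OF normal_imp_subgroup[OF N]] by simp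
qed auto

end

theorem lemma2p10:
  fixes G (structure) and p :: nat
  assumes "group G"
    and "Factorial_Ring.prime p"
    and "finite (carrier G)"
    and "order G = p ^ 7"
    and "nilpotency_class G 4"
    and "card (lower_central G 2) = p ^ 5"
  shows "comm_group (G\<lparr>carrier := lower_central G 2\<rparr>)"
proof -
  interpret group G by fact
  note pr = assms(2)
  have p1: "1 < p" using pr prime_gt_1_nat by blast
  define C2 where "C2 = lower_central G 2"
  define C3 where "C3 = lower_central G 3"
  define C4 where "C4 = lower_central G 4"
  have e2: "C2 = comm_subgroup G (carrier G) (carrier G)"
    unfolding C2_def by (simp add: numeral_eq_Suc)
  have e3: "C3 = comm_subgroup G C2 (carrier G)"
    unfolding C2_def C3_def by (simp add: numeral_eq_Suc)
  have e4: "C4 = comm_subgroup G C3 (carrier G)"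
    unfolding C4_def C3_def by (simp add: numeral_eq_Suc)
  have e5: "comm_subgroup G C4 (carrier G) = {\<one>}"
    using assms(5) unfolding nilpotency_class_def C4_def by (simp add: numeral_eq_Suc)
  have sub2: "subgroup C2 G" unfolding e2 by (rule comm_subgroup_sub) auto
  have C2c: "C2 \<subseteq> carrier G" using sub2 subgroup.subset by blast
  have comm2: "g \<otimes> n \<otimes> inv g \<otimes> inv n \<in> C2" if "g \<in> carrier G" "n \<in> C2" for g n
  proof -
    have "n \<in> carrier G" by (rule subsetD[OF C2c that(2)])
    then show ?thesis unfolding e2 by (rule comm_in[OF that(1)])
  qed
  have nor2: "C2 \<lhd> G"
    by (rule comm_normal[OF sub2 comm2])
  have C32: "C3 \<subseteq> C2" unfolding e3
  proof (rule comm_subgroup_min[OF sub2])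
    fix h k assume h: "h \<in> C2" and k: "k \<in> carrier G"
    have hc: "h \<in> carrier G" by (rule subsetD[OF C2c h])
    have "k \<otimes> inv h \<otimes> inv k \<in> C2"
      by (rule normal.inv_op_closed2[OF nor2 k subgroup.m_inv_closed[OF sub2 h]])
    then have "h \<otimes> (k \<otimes> inv h \<otimes> inv k) \<in> C2" by (rule subgroup.m_closed[OF sub2 h])
    then show "h \<otimes> k \<otimes> inv h \<otimes> inv k \<in> C2" using hc k by (simp add: m_assoc)
  qed
  have sub3: "subgroup C3 G" unfolding e3 by (rule comm_subgroup_sub) (use C2c in auto)
  have C3c: "C3 \<subseteq> carrier G" using sub3 subgroup.subset by blast
  have comm3: "g \<otimes> n \<otimes> inv g \<otimes> inv n \<in> C3" if "g \<in> carrier G" "n \<in> C2" for g n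
  proof -
    have nc: "n \<in> carrier G" by (rule subsetD[OF C2c that(2)])
    have "inv (n \<otimes> g \<otimes> inv n \<otimes> inv g) \<in> C3"
      unfolding e3 by (intro subgroup.m_inv_closed[OF sub3[unfolded e3]] comm_in that)
    then show ?thesis using comm_inv[OF nc that(1)] by simp
  qed
  have nor3: "C3 \<lhd> G"
  proof (rule comm_normal[OF sub3])
    fix g n assume gn: "g \<in> carrier G" "n \<in> C3"
    show "g \<otimes> n \<otimes> inv g \<otimes> inv n \<in> C3" by (rule comm3[OF gn(1) subsetD[OF C32 gn(2)]])
  qed
  have C4c: "C4 \<subseteq> carrier G" unfolding e4 
    by (rule subgroup.subset[OF comm_subgroup_sub[OF C3c, of "carrier G"]]) simp
  have cen4: "x \<otimes> g = g \<otimes> x" if "x \<in> C4" "g \<in> carrier G" for x g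
  proof -
    have "x \<otimes> g \<otimes> inv x \<otimes> inv g \<in> {\<one>}" using comm_in[OF that, of G] e5 by simp
    then show ?thesis using comm_one_iff that C4c by auto
  qed
  have key1: "x \<otimes> y = y \<otimes> x" if x: "x \<in> C3" and y: "y \<in> C2" for x y
  proof -
    have xc: "x \<in> carrier G" by (rule subsetD[OF C3c x])
    define f where "f = (\<lambda>g. x \<otimes> g \<otimes> inv x \<otimes> inv g)"
    have f4: "f g \<in> C4" if "g \<in> carrier G" for g
      unfolding f_def e4 by (rule comm_in[OF x that])
    have fc: "f g \<in> carrier G" if "g \<in> carrier G" for g by (rule subsetD[OF C4c f4[OF that]])
    have fm: "f (g \<otimes> h) = f g \<otimes> f h" if g: "g \<in> carrier G" and h: "h \<in> carrier G" for g h
    proof -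
      have "g \<otimes> f h \<otimes> inv g = f h"
        using cen4[OF f4[OF h] g, symmetric] g fc[OF h] by (simp add: m_assoc)
      then have "f g \<otimes> f h = f g \<otimes> (g \<otimes> (x \<otimes> h \<otimes> inv x \<otimes> inv h) \<otimes> inv g)"
        unfolding f_def by simp
      also have "\<dots> = f (g \<otimes> h)" unfolding f_def using xc g h by (simp add: gsimps)
      finally show ?thesis by simp
    qed
    interpret fh: group_hom G G f
      by (unfold_locales) (auto intro!: homI fc fm)
    have "C2 \<subseteq> {g \<in> carrier G. x \<otimes> g = g \<otimes> x}"
      unfolding e2
    proof (rule comm_subgroup_min[OF centr_sub[OF xc]])
      fix u v assume u: "u \<in> carrier G" and v: "v \<in> carrier G"
      have w: "u \<otimes> v \<otimes> inv u \<otimes> inv v \<in> carrier G" using u v by simp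
      have "f (u \<otimes> v \<otimes> inv u \<otimes> inv v) = f u \<otimes> f v \<otimes> inv (f u) \<otimes> inv (f v)"
        using u v by simp
      also have "\<dots> = \<one>" using comm_one_iff[OF fc[OF u] fc[OF v]] cen4[OF f4[OF u] fc[OF v]] by simp
      finally have "x \<otimes> (u \<otimes> v \<otimes> inv u \<otimes> inv v) = (u \<otimes> v \<otimes> inv u \<otimes> inv v) \<otimes> x"
        unfolding f_def using comm_one_iff[OF xc w] by simp
      then show "u \<otimes> v \<otimes> inv u \<otimes> inv v \<in> {g \<in> carrier G. x \<otimes> g = g \<otimes> x}" using w by simp
    qed
    then show ?thesis using y by blast
  qed
  have fin: "finite (carrier G)" by fact
  have cardpow: "\<exists>i\<le>7. card H = p ^ i" if "subgroup H G" for H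
  proof -
    have "card H dvd p ^ 7" unfolding assms(4)[symmetric] lagrange[OF that, symmetric] by simp
    then show ?thesis by (simp only: divides_primepow_nat[OF pr])
  qed
  have bigger: "card A < card B" if "A \<subseteq> B" "x \<in> B" "x \<notin> A" "B \<subseteq> carrier G" for A B x
  proof (rule psubset_card_mono)
    show "finite B" by (rule finite_subset[OF that(4) fin])
    show "A < B" using that(1-3) by auto
  qed
  obtain a b where ab: "a \<in> carrier G" "b \<in> carrier G"
    and gen: "generate G ({a, b} \<union> C2) = carrier G"
  proof -
    have "card C2 < order G" using assms(4,6) p1 unfolding C2_def by simp
    then have "C2 \<noteq> carrier G" unfolding order_def by auto
    then obtain a where a: "a \<in> carrier G" "a \<notin> C2" using C2c by auto
    define H1 where "H1 = generate G (insert a C2)"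
    have sH1: "subgroup H1 G" unfolding H1_def using a C2c by (intro generate_is_subgroup) auto
    have H1c: "H1 \<subseteq> carrier G" using sH1 subgroup.subset by blast
    have CH: "C2 \<subseteq> H1" "a \<in> H1" unfolding H1_def by (auto intro: generate.incl)
    have "card C2 < card H1" by (rule bigger[OF CH(1) CH(2) a(2) H1c])
    then obtain i where i: "i \<le> 7" "card H1 = p ^ i" "p ^ 5 < p ^ i"
      using cardpow[OF sH1] assms(6) unfolding C2_def by auto
    have i6: "6 \<le> i" using i(3) p1 by (simp add: power_strict_increasing_iff)
    show ?thesis
    proof (cases "H1 = carrier G")
      case True
      then show ?thesis using that[of a a] a by (simp add: H1_def)
    next
      case False
      then obtain b where b: "b \<in> carrier G" "b \<notin> H1" using H1c by auto
      define H2 where "H2 = generate G ({a, b} \<union> C2)"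
      have sH2: "subgroup H2 G" unfolding H2_def using a b C2c by (intro generate_is_subgroup) auto
      have H2c: "H2 \<subseteq> carrier G" using sH2 subgroup.subset by blast
      have HH: "H1 \<subseteq> H2" unfolding H1_def H2_def by (rule mono_generate) auto
      have bH: "b \<in> H2" unfolding H2_def by (auto intro: generate.incl)
      have "card H1 < card H2" by (rule bigger[OF HH bH b(2) H2c])
      then obtain j where j: "j \<le> 7" "card H2 = p ^ j" "p ^ i < p ^ j"
        using cardpow[OF sH2] i by auto
      have "i < j" using j(3) p1 by (simp add: power_strict_increasing_iff)
      then have "j = 7" using i6 j(1) by simp
      then have "card H2 = card (carrier G)" using j(2) assms(4) unfolding order_def by simp
      then have "H2 = carrier G" using H2c fin by (simp add: card_subset_eq)
      then show ?thesis using that[of a b] a b unfolding H2_def by simp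
    qed
  qed
  define c where "c = a \<otimes> b \<otimes> inv a \<otimes> inv b"
  have cC2: "c \<in> C2" unfolding c_def e2 by (rule comm_in[OF ab])
  define K where "K = generate G (insert c C3)"
  have Sc: "insert c C3 \<subseteq> carrier G" using subsetD[OF C2c cC2] C3c by simp
  have subK: "subgroup K G" unfolding K_def by (rule generate_is_subgroup[OF Sc])
  have KC2: "K \<subseteq> C2" unfolding K_def using cC2 C32 by (intro generate_subgroup_incl sub2) auto
  have C3K: "C3 \<subseteq> K" unfolding K_def by (auto intro: generate.incl)
  have cK: "c \<in> K" unfolding K_def by (auto intro: generate.incl)
  have norK: "K \<lhd> G"
  proof (rule comm_normal[OF subK])
    fix g n assume gn: "g \<in> carrier G" "n \<in> K"
    have "g \<otimes> n \<otimes> inv g \<otimes> inv n \<in> C3" by (rule comm3[OF gn(1) subsetD[OF KC2 gn(2)]])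
    then show "g \<otimes> n \<otimes> inv g \<otimes> inv n \<in> K" by (rule subsetD[OF C3K])
  qed
  have Kcomm: "x \<otimes> y = y \<otimes> x" if "x \<in> K" "y \<in> K" for x y
  proof (rule generate_comm[OF Sc _ that[unfolded K_def]])
    fix u v assume u: "u \<in> insert c C3" and v: "v \<in> insert c C3"
    show "u \<otimes> v = v \<otimes> u"
      using u v key1 cC2 C32 by auto
  qed
  let ?P = "\<lambda>x y. x \<otimes> y \<otimes> inv x \<otimes> inv y \<in> K"
  have sym: "?P y x" if "?P x y" "x \<in> carrier G" "y \<in> carrier G" for x y
    using subgroup.m_inv_closed[OF subK that(1)] comm_inv[OF that(2,3)] by simp
  have Pn: "?P x n" if "x \<in> carrier G" "n \<in> C2" for x n
    by (rule subsetD[OF C3K comm3[OF that]])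
  have Pxx: "?P x x" if "x \<in> carrier G" for x
    using that subgroup.one_closed[OF subK] by (simp add: gsimps)
  have full: "?P x y" if x: "x \<in> carrier G" "?P x a" "?P x b" and y: "y \<in> carrier G" for x y
  proof -
    have "generate G ({a, b} \<union> C2) \<subseteq> {y \<in> carrier G. ?P x y}"
      using x ab Pn by (intro generate_subgroup_incl T_sub[OF norK x(1)]) (auto dest: subsetD[OF C2c])
    then show ?thesis using gen y by blast
  qed
  have Pa: "?P a y" if "y \<in> carrier G" for y
    using full[OF ab(1) Pxx[OF ab(1)] _ that] cK unfolding c_def by blast
  have Pb: "?P b y" if "y \<in> carrier G" for y
    using full[OF ab(2) sym[OF Pa[OF ab(2)] ab] Pxx[OF ab(2)] that] .
  have Pall: "?P x y" if "x \<in> carrier G" "y \<in> carrier G" for x y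
    using full[OF that(1) sym[OF Pa[OF that(1)] ab(1) that(1)] sym[OF Pb[OF that(1)] ab(2) that(1)] that(2)] .
  have C2K: "C2 \<subseteq> K" unfolding e2 by (rule comm_subgroup_min[OF subK]) (use Pall in auto)
  show ?thesis
    unfolding C2_def[symmetric]
  proof (rule group.group_comm_groupI)
    show "group (G\<lparr>carrier := C2\<rparr>)" by (rule subgroup_imp_group[OF sub2])
  next
    fix x y assume "x \<in> carrier (G\<lparr>carrier := C2\<rparr>)" "y \<in> carrier (G\<lparr>carrier := C2\<rparr>)"
    then show "x \<otimes>\<^bsub>G\<lparr>carrier := C2\<rparr>\<^esub> y = y \<otimes>\<^bsub>G\<lparr>carrier := C2\<rparr>\<^esub> x"
      using Kcomm C2K by auto
  qed
qed

end
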